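(* Let $\tau\in[0,1)$. In a finite-horizon MDP with wealth levels as described in the context, the optimal upper $\tau$-quantile $\overline{q}^*=\max_\pi \overline{q}^\pi_\tau$ (maximum over all policies at horizon $T$, with respect to $\prec_{\mathcal W}$) satisfies $$\overline{q}^* = \max\{w\in\mathcal W_T : G^*(w)\ge 1-\tau\},\qquad\text{where } G^*(w)=\max_\pi G^\pi(w)\ \text{ for all } w,$$ the maximum over $w$ being with respect to $\preceq_{\mathcal W}$ and the maximum over $\pi$ being over all policies at horizon $T$.
   Context: An MDP is a tuple $(\mathcal S,\mathcal A,\mathcal P,r,s_0)$ with finite state set $\mathcal S$, finite action set $\mathcal A$, transition probabilities $\mathcal P(s,a,s')$, reward function $r:\mathcal S\times\mathcal A\to\mathcal R$ (values in some set $\mathcal R$), initial state $s_0$, and finite horizon $T$. A $t$-history is $h_t=(s_0,a_0,s_1,\dots,a_{t-1},s_t)$; a policy is a sequence of $T$ decision rules (possibly history-dependent and randomized) selecting actions. The wealth of a history is defined by $w(h_0)=w_0$ and $w(h_t)=w(h_{t-1})\circ r(s_{t-1},a_{t-1})$, where $\circ:\mathcal W\times\mathcal R\to\mathcal W$ is a binary operation on a wealth space $\mathcal W$ with left identity $w_0$. Let $\mathcal W_T$ be the set of wealth levels of $T$-histories; it is totally ordered by $\preceq_{\mathcal W}$ (strict part $\prec_{\mathcal W}$), has a least element $w_{\min}$ and a greatest element $w_{\max}$, and carries a distance $d$ consistent with the order. For a policy $\pi$, $p^\pi(w)$ is the probability that the $T$-history generated by $\pi$ from $s_0$ has wealth $w\in\mathcal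 W_T$; $G^\pi(w)=\sum_{w\preceq_{\mathcal W} w'}p^\pi(w')$. The upper $\tau$-quantile of $\pi$ is $\overline{q}^\pi_\tau=\max\{w\in\mathcal W_T: G^\pi(w)\ge 1-\tau\}$ (maximum w.r.t. $\prec_{\mathcal W}$). *)

theory Defs
  imports Complex_Main
begin

text \<open>A T-history is represented by its state sequence ss = [s_0,...,s_T]
 (length T+1) and its action sequence as = [a_0,...,a_{T-1}] (length T).
 A (history-dependent, randomized) policy is a family of decision rules
 pol t ss as a = probability of choosing action a at time t after the
 t-history (ss, as) with length ss = t+1, length as = t.\<close>

definition histories :: "'s \<Rightarrow> nat \<Rightarrow> ('s list \<times> 'a list) set" where
  "histories s0 T = {(ss, as). length ss = Suc T \<and> length as = T \<and> ss ! 0 = s0}"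

definition is_policy :: "nat \<Rightarrow> (nat \<Rightarrow> 's list \<Rightarrow> 'a::finite list \<Rightarrow> 'a \<Rightarrow> real) \<Rightarrow> bool" where
  "is_policy T pol \<longleftrightarrow> (\<forall>t<T. \<forall>ss as.
      (\<forall>a. 0 \<le> pol t ss as a) \<and> (\<Sum>a\<in>(UNIV::'a set). pol t ss as a) = 1)"

definition hist_prob ::
  "('s \<Rightarrow> 'a \<Rightarrow> 's \<Rightarrow> real) \<Rightarrow> nat \<Rightarrow> (nat \<Rightarrow> 's list \<Rightarrow> 'a list \<Rightarrow> 'a \<Rightarrow> real)
     \<Rightarrow> 's list \<times> 'a list \<Rightarrow> real" where
  "hist_prob P T pol h = (case h of (ss, as) \<Rightarrow>
      (\<Prod>t<T. pol t (take (Suc t) ss) (take t as) (as ! t) * P (ss ! t) (as ! t) (ss ! Suc t)))"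

definition wealth :: "('w \<Rightarrow> 'r \<Rightarrow> 'w) \<Rightarrow> 'w \<Rightarrow> ('s \<Rightarrow> 'a \<Rightarrow> 'r) \<Rightarrow> 's list \<times> 'a list \<Rightarrow> 'w" where
  "wealth circ w0 r h = (case h of (ss, as) \<Rightarrow>
      foldl (\<lambda>w (s, a). circ w (r s a)) w0 (zip ss as))"

definition wealth_levels ::
  "('w \<Rightarrow> 'r \<Rightarrow> 'w) \<Rightarrow> 'w \<Rightarrow> ('s \<Rightarrow> 'a \<Rightarrow> 'r) \<Rightarrow> 's \<Rightarrow> nat \<Rightarrow> 'w set" where
  "wealth_levels circ w0 r s0 T = wealth circ w0 r ` histories s0 T"

definition pw ::
  "('s \<Rightarrow> 'a \<Rightarrow> 's \<Rightarrow> real) \<Rightarrow> ('w \<Rightarrow> 'r \<Rightarrow> 'w) \<Rightarrow> 'w \<Rightarrow> ('s \<Rightarrow> 'a \<Rightarrow> 'r) \<Rightarrow> 's \<Rightarrow> nat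
    \<Rightarrow> (nat \<Rightarrow> 's list \<Rightarrow> 'a list \<Rightarrow> 'a \<Rightarrow> real) \<Rightarrow> 'w \<Rightarrow> real" where
  "pw P circ w0 r s0 T pol w =
     (\<Sum>h\<in>{h\<in>histories s0 T. wealth circ w0 r h = w}. hist_prob P T pol h)"

definition Gw ::
  "('s \<Rightarrow> 'a \<Rightarrow> 's \<Rightarrow> real) \<Rightarrow> ('w::linorder \<Rightarrow> 'r \<Rightarrow> 'w) \<Rightarrow> 'w \<Rightarrow> ('s \<Rightarrow> 'a \<Rightarrow> 'r) \<Rightarrow> 's \<Rightarrow> nat
    \<Rightarrow> (nat \<Rightarrow> 's list \<Rightarrow> 'a list \<Rightarrow> 'a \<Rightarrow> real) \<Rightarrow> 'w \<Rightarrow> real" where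
  "Gw P circ w0 r s0 T pol w =
     (\<Sum>w'\<in>{w'\<in>wealth_levels circ w0 r s0 T. w \<le> w'}. pw P circ w0 r s0 T pol w')"

definition upper_quantile ::
  "('s \<Rightarrow> 'a \<Rightarrow> 's \<Rightarrow> real) \<Rightarrow> ('w::linorder \<Rightarrow> 'r \<Rightarrow> 'w) \<Rightarrow> 'w \<Rightarrow> ('s \<Rightarrow> 'a \<Rightarrow> 'r) \<Rightarrow> 's \<Rightarrow> nat
    \<Rightarrow> real \<Rightarrow> (nat \<Rightarrow> 's list \<Rightarrow> 'a list \<Rightarrow> 'a \<Rightarrow> real) \<Rightarrow> 'w" where
  "upper_quantile P circ w0 r s0 T \<tau> pol =
     Max {w\<in>wealth_levels circ w0 r s0 T. Gw P circ w0 r s0 T pol w \<ge> 1 - \<tau>}"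

text \<open>Optimal tail function G^*(w) (supremum over all policies; the theorem
 asserts that it is attained).\<close>
definition Gstar ::
  "('s \<Rightarrow> 'a::finite \<Rightarrow> 's \<Rightarrow> real) \<Rightarrow> ('w::linorder \<Rightarrow> 'r \<Rightarrow> 'w) \<Rightarrow> 'w \<Rightarrow> ('s \<Rightarrow> 'a \<Rightarrow> 'r) \<Rightarrow> 's \<Rightarrow> nat
    \<Rightarrow> 'w \<Rightarrow> real" where
  "Gstar P circ w0 r s0 T w =
     (SUP pol\<in>{pol. is_policy T pol}. Gw P circ w0 r s0 T pol w)"

end

theory Submission imports Defs "HOL-Analysis.Analysis" begin

lemma finite_histories: "finite (histories (s0::'s::finite) T :: ('s list \<times> 'a::finite list) set)"
proof -
  have "histories s0 T \<subseteq> {ss::'s list. set ss \<subseteq> UNIV \<and> length ss = Suc T} \<times> {as::'a list. set as \<subseteq> UNIV \<and> length as = T}"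
    by (auto simp: histories_def)
  then show ?thesis
    by (rule finite_subset) (intro finite_cartesian_product finite_lists_length_eq finite)
qed

lemma hist_prob_cong: "(\<And>t. t < T \<Longrightarrow> pol t = pol' t) \<Longrightarrow> hist_prob P T pol h = hist_prob P T pol' h"
  unfolding hist_prob_def by (auto split: prod.splits intro!: prod.cong)

lemma Gw_cong: "(\<And>t. t < T \<Longrightarrow> pol t = pol' t) \<Longrightarrow> Gw P circ w0 r s0 T pol w = Gw P circ w0 r s0 T pol' w"
  unfolding Gw_def pw_def using hist_prob_cong[of T pol pol' P] by simp

lemma histories_Suc:
  "histories s0 (Suc T) = (\<lambda>((ss,as),a,s'). (ss@[s'], as@[a])) ` (histories s0 T \<times> UNIV \<times> UNIV)"
proof
  show "histories s0 (Suc T) \<subseteq> (\<lambda>((ss,as),a,s'). (ss@[s'], as@[a])) ` (histories s0 T \<times> UNIV \<times> UNIV)"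
  proof
    fix h assume h: "h \<in> histories s0 (Suc T)"
    obtain ss as where hs: "h = (ss, as)" by force
    have l: "length ss = Suc (Suc T)" "length as = Suc T" "ss ! 0 = s0" using h hs by (auto simp: histories_def)
    have ne: "ss \<noteq> []" "as \<noteq> []" using l by auto
    have "(butlast ss, butlast as) \<in> histories s0 T"
      using l by (auto simp: histories_def nth_butlast)
    moreover have "h = (butlast ss @ [last ss], butlast as @ [last as])"
      using ne hs by simp
    ultimately show "h \<in> (\<lambda>((ss,as),a,s'). (ss@[s'], as@[a])) ` (histories s0 T \<times> UNIV \<times> UNIV)"
      by (intro image_eqI[where x="((butlast ss, butlast as), last as, last ss)"]) auto
  qed
  show "(\<lambda>((ss,as),a,s'). (ss@[s'], as@[a])) ` (histories s0 T \<times> UNIV \<times> UNIV) \<subseteq> histories s0 (Suc T)"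
    by (auto simp: histories_def nth_append)
qed

lemma hist_prob_snoc:
  assumes "length ss = Suc T" "length as = T"
  shows "hist_prob P (Suc T) pol (ss@[s'], as@[a]) = hist_prob P T pol (ss,as) * (pol T ss as a * P (ss!T) a s')"
proof -
  have "(\<Prod>t<T. pol t (take (Suc t) (ss@[s'])) (take t (as@[a])) ((as@[a]) ! t) * P ((ss@[s']) ! t) ((as@[a]) ! t) ((ss@[s']) ! Suc t))
      = (\<Prod>t<T. pol t (take (Suc t) ss) (take t as) (as ! t) * P (ss ! t) (as ! t) (ss ! Suc t))"
    using assms by (intro prod.cong) (auto simp: nth_append)
  then show ?thesis using assms by (simp add: hist_prob_def nth_append)
qed

lemma is_policy_Suc: "is_policy (Suc T) pol \<Longrightarrow> is_policy T pol"
  by (simp add: is_policy_def)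

lemma total_prob:
  fixes P :: "'s::finite \<Rightarrow> 'a::finite \<Rightarrow> 's \<Rightarrow> real"
  assumes P_sum: "\<And>s a. (\<Sum>s'\<in>UNIV. P s a s') = 1"
  shows "is_policy T pol \<Longrightarrow> (\<Sum>h\<in>histories s0 T. hist_prob P T pol h) = 1"
proof (induction T)
  case 0
  have "histories s0 0 = {([s0], [] :: 'a list)}"
    by (auto simp: histories_def length_Suc_conv)
  then show ?case by (simp add: hist_prob_def)
next
  case (Suc T)
  have IH: "(\<Sum>h\<in>histories s0 T. hist_prob P T pol h) = 1"
    using Suc by (simp add: is_policy_Suc)
  have pol1: "(\<Sum>a\<in>UNIV. pol T ss as a) = 1" for ss as using Suc.prems by (simp add: is_policy_def)
  have inj: "inj_on (\<lambda>((ss,as),a,s'). (ss@[s'], as@[a])) (histories s0 T \<times> (UNIV::'a set) \<times> (UNIV::'s set))"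
    by (auto simp: inj_on_def)
  have "(\<Sum>h\<in>histories s0 (Suc T). hist_prob P (Suc T) pol h)
      = (\<Sum>x\<in>histories s0 T \<times> (UNIV::'a set) \<times> (UNIV::'s set). hist_prob P (Suc T) pol ((\<lambda>((ss,as),a,s'). (ss@[s'], as@[a])) x))"
    unfolding histories_Suc by (rule sum.reindex[OF inj, unfolded comp_def])
  also have "\<dots> = (\<Sum>h\<in>histories s0 T. \<Sum>a\<in>UNIV. \<Sum>s'\<in>UNIV. hist_prob P T pol h * (pol T (fst h) (snd h) a * P (fst h ! T) a s'))"
    unfolding sum.cartesian_product
    by (intro sum.cong refl) (auto simp: histories_def hist_prob_snoc split: prod.splits)
  also have "\<dots> = (\<Sum>h\<in>histories s0 T. hist_prob P T pol h * (\<Sum>a\<in>UNIV. pol T (fst h) (snd h) a * (\<Sum>s'\<in>UNIV. P (fst h ! T) a s')))"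
    by (simp add: sum_distrib_left)
  also have "\<dots> = 1" using IH by (simp add: P_sum pol1)
  finally show ?case .
qed

lemma Gw_cont:
  "continuous_on UNIV (\<lambda>f::(nat \<times> 's::finite list \<times> 'a::finite list \<times> 'a) \<Rightarrow> real.
      Gw P circ w0 r s0 T (\<lambda>t ss as a. f (t,ss,as,a)) w)"
  unfolding Gw_def pw_def hist_prob_def split_beta
  by (intro continuous_intros continuous_on_product_coordinates)

lemma policy_le1: "is_policy T pol \<Longrightarrow> t < T \<Longrightarrow> pol t ss as (a::'a::finite) \<le> 1"
  unfolding is_policy_def
  by (metis finite UNIV_I member_le_sum)

lemma opt_exists:
  fixes P :: "'s::finite \<Rightarrow> 'a::finite \<Rightarrow> 's \<Rightarrow> real"
  shows "\<exists>pol. is_policy T pol \<and> (\<forall>pol'. is_policy T pol' \<longrightarrow> Gw P circ w0 r s0 T pol' w \<le> Gw P circ w0 r s0 T pol w)"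
proof -
  define S where "S i = (if fst i < T then {0..1::real} else {0})" for i :: "nat \<times> 's list \<times> 'a list \<times> 'a"
  define K where "K = Pi UNIV S \<inter> {f. \<forall>t ss as. t < T \<longrightarrow> (\<Sum>a\<in>UNIV. f (t,ss,as,a)) = 1}"
  define g where "g f = Gw P circ w0 r s0 T (\<lambda>t ss as a. f (t,ss,as,a)) w" for f
  have "compactin (product_topology (\<lambda>_. euclidean) UNIV) (PiE UNIV S)"
    by (subst compactin_PiE) (auto simp: S_def)
  then have c1: "compact (Pi UNIV S)"
    by (simp add: euclidean_product_topology PiE_UNIV_domain)
  have c2: "closed {f. \<forall>t ss as. t < T \<longrightarrow> (\<Sum>a\<in>UNIV. f (t,ss,as,a)) = (1::real)}"
    by (intro closed_Collect_all closed_Collect_imp open_Collect_const closed_Collect_eq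
        continuous_intros continuous_on_product_coordinates)
  have cK: "compact K" unfolding K_def using c1 c2 by (rule compact_Int_closed)
  define f0 where "f0 i = (if fst i < T then 1 / real CARD('a) else 0)" for i :: "nat \<times> 's list \<times> 'a list \<times> 'a"
  have "f0 \<in> K"
    by (auto simp: K_def S_def f0_def)
  then have neK: "K \<noteq> {}" by auto
  have cg: "continuous_on K g" unfolding g_def
    by (rule continuous_on_subset[OF Gw_cont]) simp
  obtain f where fK: "f \<in> K" and fmax: "\<And>y. y \<in> K \<Longrightarrow> g y \<le> g f"
    using continuous_attains_sup[OF cK neK cg] by blast
  have pf: "is_policy T (\<lambda>t ss as a. f (t,ss,as,a))"
  proof -
    have h1: "(\<Sum>a\<in>UNIV. f (t, ss, as, a)) = 1" if t: "t < T" for t ss as using fK t by (simp add: K_def)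
    have h2: "0 \<le> f (t, ss, as, a)" if t: "t < T" for t ss as a
    proof -
      have "f (t,ss,as,a) \<in> S (t,ss,as,a)" using fK by (auto simp: K_def)
      then show "0 \<le> f (t, ss, as, a)" using t by (simp add: S_def)
    qed
    show ?thesis unfolding is_policy_def using h1 h2 by simp
  qed
  show ?thesis
  proof (intro exI conjI allI impI)
    show "is_policy T (\<lambda>t ss as a. f (t,ss,as,a))" by (rule pf)
    fix pol' :: "nat \<Rightarrow> 's list \<Rightarrow> 'a list \<Rightarrow> 'a \<Rightarrow> real" assume p': "is_policy T pol'"
    define f' where "f' i = (case i of (t,ss,as,a) \<Rightarrow> if t < T then pol' t ss as a else 0)" for i :: "nat \<times> 's list \<times> 'a list \<times> 'a"
    have "f' \<in> K" using p' policy_le1[OF p']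
      by (auto simp: K_def S_def f'_def is_policy_def Pi_iff split: prod.splits)
    then have "g f' \<le> g f" by (rule fmax)
    moreover have "g f' = Gw P circ w0 r s0 T pol' w"
      unfolding g_def by (rule Gw_cong) (auto simp: f'_def)
    ultimately show "Gw P circ w0 r s0 T pol' w \<le> Gw P circ w0 r s0 T (\<lambda>t ss as a. f (t,ss,as,a)) w"
      by (simp add: g_def)
  qed
qed


lemma Gw_le_Gstar:
  fixes P :: "'s::finite \<Rightarrow> 'a::finite \<Rightarrow> 's \<Rightarrow> real"
  shows "\<exists>pol. is_policy T pol \<and> Gw P circ w0 r s0 T pol w = Gstar P circ w0 r s0 T w
     \<and> (\<forall>pol'. is_policy T pol' \<longrightarrow> Gw P circ w0 r s0 T pol' w \<le> Gstar P circ w0 r s0 T w)"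
proof -
  obtain pol where p: "is_policy T pol" and m: "\<And>pol'. is_policy T pol' \<Longrightarrow> Gw P circ w0 r s0 T pol' w \<le> Gw P circ w0 r s0 T pol w"
    using opt_exists[of T P circ w0 r s0 w] by blast
  have "Gstar P circ w0 r s0 T w = Gw P circ w0 r s0 T pol w"
    unfolding Gstar_def using p m by (intro cSup_eq_maximum) auto
  then show ?thesis using p m by metis
qed

lemma Gw_min:
  fixes P :: "'s::finite \<Rightarrow> 'a::finite \<Rightarrow> 's \<Rightarrow> real"
  assumes P_sum: "\<And>s a. (\<Sum>s'\<in>UNIV. P s a s') = 1" and p: "is_policy T pol"
    and wm: "\<And>w'. w' \<in> wealth_levels circ w0 r s0 T \<Longrightarrow> wm \<le> w'"
  shows "Gw P circ w0 r s0 T pol wm = 1"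
proof -
  have "Gw P circ w0 r s0 T pol wm = (\<Sum>w'\<in>wealth_levels circ w0 r s0 T. pw P circ w0 r s0 T pol w')"
    unfolding Gw_def using wm by (intro sum.cong) auto
  also have "\<dots> = (\<Sum>h\<in>histories s0 T. hist_prob P T pol h)"
    unfolding pw_def wealth_levels_def
    by (rule sum.image_gen[symmetric]) (rule finite_histories)
  also have "\<dots> = 1" by (rule total_prob[OF P_sum p])
  finally show ?thesis .
qed

theorem lemma2:
  fixes P :: "'s::finite \<Rightarrow> 'a::finite \<Rightarrow> 's \<Rightarrow> real"
    and r :: "'s \<Rightarrow> 'a \<Rightarrow> 'r"
    and circ :: "'w::linorder \<Rightarrow> 'r \<Rightarrow> 'w"
    and w0 :: 'w and s0 :: 's and T :: nat and \<tau> :: real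
  assumes P_nonneg: "\<And>s a s'. 0 \<le> P s a s'"
    and P_sum: "\<And>s a. (\<Sum>s'\<in>UNIV. P s a s') = 1"
    and tau: "0 \<le> \<tau>" "\<tau> < 1"
  shows "(\<forall>w. \<exists>pol. is_policy T pol \<and> Gw P circ w0 r s0 T pol w = Gstar P circ w0 r s0 T w)
       \<and> (\<exists>pol. is_policy T pol \<and>
            upper_quantile P circ w0 r s0 T \<tau> pol
              = Max {w\<in>wealth_levels circ w0 r s0 T. Gstar P circ w0 r s0 T w \<ge> 1 - \<tau>})
       \<and> (\<forall>pol. is_policy T pol \<longrightarrow>
            upper_quantile P circ w0 r s0 T \<tau> pol
              \<le> Max {w\<in>wealth_levels circ w0 r s0 T. Gstar P circ w0 r s0 T w \<ge> 1 - \<tau>})"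
proof -
  let ?W = "wealth_levels circ w0 r s0 T"
  let ?G = "Gw P circ w0 r s0 T"
  let ?Gs = "Gstar P circ w0 r s0 T"
  define Ss where "Ss = {w\<in>?W. ?Gs w \<ge> 1 - \<tau>}"
  have finW: "finite ?W" unfolding wealth_levels_def by (intro finite_imageI finite_histories)
  have "(replicate (Suc T) s0, replicate T (undefined::'a)) \<in> histories s0 T"
    by (simp add: histories_def)
  then have neW: "?W \<noteq> {}" unfolding wealth_levels_def by blast
  define wm where "wm = Min ?W"
  have wmW: "wm \<in> ?W" unfolding wm_def using finW neW by simp
  have wmle: "\<And>w'. w' \<in> ?W \<Longrightarrow> wm \<le> w'" unfolding wm_def using finW by simp
  have G1: "is_policy T pol \<Longrightarrow> ?G pol wm = 1" for pol
    by (rule Gw_min[OF P_sum _ wmle])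
  have opt: "\<exists>pol. is_policy T pol \<and> ?G pol w = ?Gs w \<and> (\<forall>pol'. is_policy T pol' \<longrightarrow> ?G pol' w \<le> ?Gs w)" for w
    by (rule Gw_le_Gstar)
  have Sq: "upper_quantile P circ w0 r s0 T \<tau> pol \<in> {w\<in>?W. ?G pol w \<ge> 1 - \<tau>}"
    if p: "is_policy T pol" for pol
  proof -
    have "wm \<in> {w\<in>?W. ?G pol w \<ge> 1 - \<tau>}" using wmW G1[OF p] tau by simp
    then show ?thesis unfolding upper_quantile_def using finW by (intro Max_in) auto
  qed
  have finSs: "finite Ss" unfolding Ss_def using finW by simp
  have part3: "upper_quantile P circ w0 r s0 T \<tau> pol \<le> Max Ss" if p: "is_policy T pol" for pol
  proof -
    let ?u = "upper_quantile P circ w0 r s0 T \<tau> pol"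
    have "?u \<in> ?W" "?G pol ?u \<ge> 1 - \<tau>" using Sq[OF p] by auto
    moreover have "?G pol ?u \<le> ?Gs ?u" using opt[of ?u] p by blast
    ultimately have "?u \<in> Ss" unfolding Ss_def by auto
    then show ?thesis using finSs by simp
  qed
  have part2: "\<exists>pol. is_policy T pol \<and> upper_quantile P circ w0 r s0 T \<tau> pol = Max Ss"
  proof -
    obtain p0 :: "nat \<Rightarrow> 's list \<Rightarrow> 'a list \<Rightarrow> 'a \<Rightarrow> real" where p0: "is_policy T p0"
      using opt by blast
    have "wm \<in> Ss" unfolding Ss_def using wmW G1[OF p0] opt[of wm] p0 tau by force
    then have MS: "Max Ss \<in> Ss" using finSs by (intro Max_in) auto
    obtain pol where p: "is_policy T pol" and eq: "?G pol (Max Ss) = ?Gs (Max Ss)"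
      using opt by blast
    have "Max Ss \<in> {w\<in>?W. ?G pol w \<ge> 1 - \<tau>}" using MS eq unfolding Ss_def by auto
    then have "Max Ss \<le> upper_quantile P circ w0 r s0 T \<tau> pol"
      unfolding upper_quantile_def using finW by simp
    then show ?thesis using part3[OF p] p by (intro exI[of _ pol]) auto
  qed
  show ?thesis using opt part2 part3 unfolding Ss_def by blast
qed

end
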